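(* Let $I\subset\mathbb{R}$ be an open interval, $\lambda:I\to\mathbb{R}$ a non-constant positive smooth function, and fix a sign $\pm$. For $c\in I$, let $f_c:\mathbb{R}^2\to\tilde M(1-\lambda^2,2(1\pm\lambda))$, $f_c(x,y)=(x,y,c)$, with $\mathbb{R}^2$ carrying the induced metric (so $f_c$ is an anti-invariant isometric immersion with unit normal $e_3$). Then $f_c$ is proper biharmonic if and only if $\lambda'(c)\neq0$ and $$\Big(\lambda\lambda''-2(\lambda')^2-8\lambda^2(1\pm\lambda)^2\Big)\Big|_{z=c}=0,$$ with the sign $\pm$ the same as in $\tilde M(1-\lambda^2,2(1\pm\lambda))$.
   Context: Definition of $\tilde M(1-\lambda^2,2(1\pm\lambda))$: Let $\lambda:I\to\mathbb{R}$ be a non-constant positive smooth function on an open interval $I$, $\lambda'=d\lambda/dz$. On $\tilde M^3=\mathbb{R}^2\times I\subset\mathbb{R}^3$ with coordinates $(x,y,z)$ consider the vector fields $e_1=\partial_x$, $e_2=\partial_y$, $e_3=(\pm 2y+f(z))\partial_x+\big(2\lambda x-\frac{\lambda'}{2\lambda}y+h(z)\big)\partial_y+\partial_z$, where $f,h$ are arbitrary smooth functions of $z$. Let $g$ be the Riemannian metric with $g(e_i,e_j)=\delta_{ij}$, $\xi=e_1$, $\eta$ the $1$-form dual to $e_1$, and $\phi$ the $(1,1)$-tensor with $\phi e_1=0$, $\phi e_2=\pm e_3$, $\phi e_3=\mp e_2$ (all double signs correspond to the sign in $\pm 2y$). This is a contact metric manifold which is a generalized $(\kappa,\mu)$-manifold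 with $\kappa=1-\lambda^2$, $\mu=2(1\pm\lambda)$. A surface is anti-invariant if tangent to $\xi$ and $g(X,\phi Y)=0$ for tangent $X,Y$. An isometric immersion $f$ is biharmonic if $\tau_2(f)=-\Delta_f\tau(f)+\mathrm{trace}\,\tilde R(\tau(f),df)df=0$ ($\tau(f)=2H$, $H$ the mean curvature vector, $\tilde R(X,Y)=[\tilde\nabla_X,\tilde\nabla_Y]-\tilde\nabla_{[X,Y]}$), and proper biharmonic if biharmonic and not minimal. *)

theory Defs
  imports "HOL-Analysis.Analysis"
begin

definition pd :: "(real^'n \<Rightarrow> real) \<Rightarrow> 'n \<Rightarrow> real^'n \<Rightarrow> real" where
  "pd F i p = deriv (\<lambda>t. F (p + t *\<^sub>R axis i 1)) 0"

definition smooth_on :: "real set \<Rightarrow> (real \<Rightarrow> real) \<Rightarrow> bool" where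
  "smooth_on I F \<longleftrightarrow> (\<forall>n. \<forall>z\<in>I. ((deriv ^^ n) F) differentiable (at z))"

(* metric tensor in coordinates: G p $ i $ j = g(d_i, d_j) at p.
   Christoffel symbols Gamma^k_{ij} of the Levi-Civita connection *)
definition christoffel :: "(real^'n \<Rightarrow> real^'n^'n) \<Rightarrow> real^'n \<Rightarrow> 'n \<Rightarrow> 'n \<Rightarrow> 'n \<Rightarrow> real" where
  "christoffel G p k i j =
     (\<Sum>l\<in>UNIV. matrix_inv (G p) $ k $ l *
        (pd (\<lambda>q. G q $ j $ l) i p + pd (\<lambda>q. G q $ i $ l) j p - pd (\<lambda>q. G q $ i $ j) l p)) / 2"

(* Riemann curvature components, R(d_i,d_j)d_k = sum_l R^l_{ijk} d_l,
   with R(X,Y) = [nabla_X, nabla_Y] - nabla_[X,Y] *)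
definition curv :: "(real^'n \<Rightarrow> real^'n^'n) \<Rightarrow> real^'n \<Rightarrow> 'n \<Rightarrow> 'n \<Rightarrow> 'n \<Rightarrow> 'n \<Rightarrow> real" where
  "curv G p l i j k =
     pd (\<lambda>q. christoffel G q l j k) i p - pd (\<lambda>q. christoffel G q l i k) j p
     + (\<Sum>m\<in>UNIV. christoffel G p l i m * christoffel G p m j k
                   - christoffel G p l j m * christoffel G p m i k)"

definition curv_op :: "(real^'n \<Rightarrow> real^'n^'n) \<Rightarrow> real^'n \<Rightarrow> real^'n \<Rightarrow> real^'n \<Rightarrow> real^'n \<Rightarrow> real^'n" where
  "curv_op G p X Y Z = (\<chi> l. \<Sum>i\<in>UNIV. \<Sum>j\<in>UNIV. \<Sum>k\<in>UNIV. X $ i * Y $ j * Z $ k * curv G p l i j k)"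

definition dmap :: "(real^'m \<Rightarrow> real^'n) \<Rightarrow> 'm \<Rightarrow> real^'m \<Rightarrow> real^'n" where
  "dmap f a u = (\<chi> k. pd (\<lambda>w. f w $ k) a u)"

definition ind_metric :: "(real^'n \<Rightarrow> real^'n^'n) \<Rightarrow> (real^'m \<Rightarrow> real^'n) \<Rightarrow> real^'m \<Rightarrow> real^'m^'m" where
  "ind_metric G f u = (\<chi> a b. dmap f a u \<bullet> (G (f u) *v dmap f b u))"

definition covd :: "(real^'n \<Rightarrow> real^'n^'n) \<Rightarrow> (real^'m \<Rightarrow> real^'n) \<Rightarrow> (real^'m \<Rightarrow> real^'n) \<Rightarrow> 'm \<Rightarrow> real^'m \<Rightarrow> real^'n" where
  "covd G f V a u = (\<chi> k. pd (\<lambda>w. V w $ k) a u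
      + (\<Sum>i\<in>UNIV. \<Sum>j\<in>UNIV. christoffel G (f u) k i j * dmap f a u $ i * V u $ j))"

(* tension field tau(f) = trace nabla df, domain carrying the induced metric *)
definition tension :: "(real^'n \<Rightarrow> real^'n^'n) \<Rightarrow> (real^'m \<Rightarrow> real^'n) \<Rightarrow> real^'m \<Rightarrow> real^'n" where
  "tension G f u = (\<Sum>a\<in>UNIV. \<Sum>b\<in>UNIV. matrix_inv (ind_metric G f u) $ a $ b *\<^sub>R
       (covd G f (dmap f b) a u
        - (\<Sum>c\<in>UNIV. christoffel (ind_metric G f) u c a b *\<^sub>R dmap f c u)))"

(* bitension field tau_2(f) = - Delta_f tau(f) + trace R(tau(f), df) df,
   with - Delta_f = trace (nabla^f nabla^f - nabla^f_nabla) *)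
definition bitension :: "(real^'n \<Rightarrow> real^'n^'n) \<Rightarrow> (real^'m \<Rightarrow> real^'n) \<Rightarrow> real^'m \<Rightarrow> real^'n" where
  "bitension G f u =
     (\<Sum>a\<in>UNIV. \<Sum>b\<in>UNIV. matrix_inv (ind_metric G f u) $ a $ b *\<^sub>R
        (covd G f (covd G f (tension G f) b) a u
         - (\<Sum>c\<in>UNIV. christoffel (ind_metric G f) u c a b *\<^sub>R covd G f (tension G f) c u)))
   + (\<Sum>a\<in>UNIV. \<Sum>b\<in>UNIV. matrix_inv (ind_metric G f u) $ a $ b *\<^sub>R
        curv_op G (f u) (tension G f u) (dmap f a u) (dmap f b u))"

definition minimal_map :: "(real^'n \<Rightarrow> real^'n^'n) \<Rightarrow> (real^'m \<Rightarrow> real^'n) \<Rightarrow> bool" where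
  "minimal_map G f \<longleftrightarrow> (\<forall>u. tension G f u = 0)"

definition biharmonic :: "(real^'n \<Rightarrow> real^'n^'n) \<Rightarrow> (real^'m \<Rightarrow> real^'n) \<Rightarrow> bool" where
  "biharmonic G f \<longleftrightarrow> (\<forall>u. bitension G f u = 0)"

definition proper_biharmonic :: "(real^'n \<Rightarrow> real^'n^'n) \<Rightarrow> (real^'m \<Rightarrow> real^'n) \<Rightarrow> bool" where
  "proper_biharmonic G f \<longleftrightarrow> biharmonic G f \<and> \<not> minimal_map G f"

(* metric for which the given frame (columns of E p) is orthonormal *)
definition frame_metric :: "(real^'n \<Rightarrow> real^'n^'n) \<Rightarrow> real^'n \<Rightarrow> real^'n^'n" where
  "frame_metric E p = transpose (matrix_inv (E p)) ** matrix_inv (E p)"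

(* s = 1 or s = -1 encodes the sign +-; ff, hh are the functions f, h *)
definition e3_field :: "real \<Rightarrow> (real \<Rightarrow> real) \<Rightarrow> (real \<Rightarrow> real) \<Rightarrow> (real \<Rightarrow> real) \<Rightarrow> real^3 \<Rightarrow> real^3" where
  "e3_field s lam ff hh p =
     (let x = p $ 1; y = p $ 2; z = p $ 3 in
      vector [s * 2 * y + ff z, 2 * lam z * x - deriv lam z / (2 * lam z) * y + hh z, 1])"

definition frame_E :: "real \<Rightarrow> (real \<Rightarrow> real) \<Rightarrow> (real \<Rightarrow> real) \<Rightarrow> (real \<Rightarrow> real) \<Rightarrow> real^3 \<Rightarrow> real^3^3" where
  "frame_E s lam ff hh p =
     transpose (vector [vector [1, 0, 0], vector [0, 1, 0], e3_field s lam ff hh p])"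

definition gkm_metric :: "real \<Rightarrow> (real \<Rightarrow> real) \<Rightarrow> (real \<Rightarrow> real) \<Rightarrow> (real \<Rightarrow> real) \<Rightarrow> real^3 \<Rightarrow> real^3^3" where
  "gkm_metric s lam ff hh = frame_metric (frame_E s lam ff hh)"

definition slice_map :: "real \<Rightarrow> real^2 \<Rightarrow> real^3" where
  "slice_map c u = vector [u $ 1, u $ 2, c]"

end

theory Submission
  imports Defs
begin

definition mat3 :: "real \<Rightarrow> real \<Rightarrow> real \<Rightarrow> real \<Rightarrow> real \<Rightarrow> real \<Rightarrow> real \<Rightarrow> real \<Rightarrow> real \<Rightarrow> real^3^3" where
  "mat3 a11 a12 a13 a21 a22 a23 a31 a32 a33 =
     vector [vector [a11,a12,a13], vector [a21,a22,a23], vector [a31,a32,a33]]"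

lemma mat3_nth[simp]:
  "mat3 a11 a12 a13 a21 a22 a23 a31 a32 a33 $ 1 $ 1 = a11"
  "mat3 a11 a12 a13 a21 a22 a23 a31 a32 a33 $ 1 $ 2 = a12"
  "mat3 a11 a12 a13 a21 a22 a23 a31 a32 a33 $ 1 $ 3 = a13"
  "mat3 a11 a12 a13 a21 a22 a23 a31 a32 a33 $ 2 $ 1 = a21"
  "mat3 a11 a12 a13 a21 a22 a23 a31 a32 a33 $ 2 $ 2 = a22"
  "mat3 a11 a12 a13 a21 a22 a23 a31 a32 a33 $ 2 $ 3 = a23"
  "mat3 a11 a12 a13 a21 a22 a23 a31 a32 a33 $ 3 $ 1 = a31"
  "mat3 a11 a12 a13 a21 a22 a23 a31 a32 a33 $ 3 $ 2 = a32"
  "mat3 a11 a12 a13 a21 a22 a23 a31 a32 a33 $ 3 $ 3 = a33"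
  by (simp_all add: mat3_def)

lemma mat3_eqI: "(\<And>i j. (A::real^3^3) $ i $ j = B $ i $ j) \<Longrightarrow> A = B"
  by (simp add: vec_eq_iff)

lemma mat3_eq_iff: "((A::real^3^3) = B) \<longleftrightarrow> (\<forall>i j. A $ i $ j = B $ i $ j)"
  by (simp add: vec_eq_iff)

lemma mat3_mult:
  "mat3 a11 a12 a13 a21 a22 a23 a31 a32 a33 ** mat3 b11 b12 b13 b21 b22 b23 b31 b32 b33 =
   mat3 (a11*b11+a12*b21+a13*b31) (a11*b12+a12*b22+a13*b32) (a11*b13+a12*b23+a13*b33)
        (a21*b11+a22*b21+a23*b31) (a21*b12+a22*b22+a23*b32) (a21*b13+a22*b23+a23*b33)
        (a31*b11+a32*b21+a33*b31) (a31*b12+a32*b22+a33*b32) (a31*b13+a32*b23+a33*b33)"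
  unfolding mat3_eq_iff forall_3 matrix_matrix_mult_def by (simp add: sum_3)

lemma mat3_transpose:
  "transpose (mat3 a11 a12 a13 a21 a22 a23 a31 a32 a33) = mat3 a11 a21 a31 a12 a22 a32 a13 a23 a33"
  unfolding mat3_eq_iff forall_3 transpose_def by simp

lemma mat3_one: "(mat 1 :: real^3^3) = mat3 1 0 0 0 1 0 0 0 1"
  unfolding mat3_eq_iff forall_3 mat_def by simp

lemma matrix_inv_eq:
  fixes A B :: "real^'n^'n"
  assumes "A ** B = mat 1" "B ** A = mat 1"
  shows "matrix_inv A = B"
proof -
  have "\<exists>A'. A ** A' = mat 1 \<and> A' ** A = mat 1" using assms by blast
  then have h: "A ** matrix_inv A = mat 1 \<and> matrix_inv A ** A = mat 1"
    unfolding matrix_inv_def by (rule someI_ex)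
  have "matrix_inv A = matrix_inv A ** (A ** B)" using assms by simp
  also have "\<dots> = (matrix_inv A ** A) ** B" by (simp add: matrix_mul_assoc)
  also have "\<dots> = B" using h by simp
  finally show ?thesis .
qed

definition Gm :: "real \<Rightarrow> real \<Rightarrow> real^3^3" where
  "Gm a b = mat3 1 0 (-a) 0 1 (-b) (-a) (-b) (1+a^2+b^2)"
definition Gi :: "real \<Rightarrow> real \<Rightarrow> real^3^3" where
  "Gi a b = mat3 (1+a^2) (a*b) a (a*b) (1+b^2) b a b 1"

lemma inv_Gm: "matrix_inv (Gm a b) = Gi a b"
  by (rule matrix_inv_eq) (simp_all add: Gm_def Gi_def mat3_mult mat3_one power2_eq_square algebra_simps)

lemma frame_metric_eq: "gkm_metric s lam ff hh p =
   Gm (s * 2 * p$2 + ff (p$3)) (2 * lam (p$3) * p$1 - deriv lam (p$3) / (2 * lam (p$3)) * p$2 + hh (p$3))"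
proof -
  define A where "A = s * 2 * p$2 + ff (p$3)"
  define B where "B = 2 * lam (p$3) * p$1 - deriv lam (p$3) / (2 * lam (p$3)) * p$2 + hh (p$3)"
  have E: "frame_E s lam ff hh p = mat3 1 0 A 0 1 B 0 0 1"
    unfolding frame_E_def e3_field_def Let_def A_def B_def
    by (simp add: mat3_def[symmetric] mat3_transpose)
  have Ei: "matrix_inv (mat3 1 0 A 0 1 B 0 0 1) = mat3 1 0 (-A) 0 1 (-B) 0 0 1"
    by (rule matrix_inv_eq) (simp_all add: mat3_mult mat3_one)
  show ?thesis
    unfolding gkm_metric_def frame_metric_def E Ei A_def[symmetric] B_def[symmetric]
    by (simp add: mat3_transpose mat3_mult Gm_def power2_eq_square add_ac)
qed

definition dGm :: "real \<Rightarrow> real \<Rightarrow> real \<Rightarrow> real \<Rightarrow> real^3^3" where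
  "dGm a b A B = mat3 0 0 (-A) 0 0 (-B) (-A) (-B) (2*a*A + 2*b*B)"

lemma Gm_deriv:
  assumes "(\<alpha> has_real_derivative A) (at 0)" "(\<beta> has_real_derivative B) (at 0)"
  shows "((\<lambda>t. Gm (\<alpha> t) (\<beta> t) $ j $ l) has_real_derivative dGm (\<alpha> 0) (\<beta> 0) A B $ j $ l) (at 0)"
  using exhaust_3[of j] exhaust_3[of l] assms
  by (auto simp: Gm_def dGm_def intro!: derivative_eq_intros)

lemma shift_deriv: "(f has_real_derivative D) (at z) \<Longrightarrow> ((\<lambda>t. f (z + t)) has_real_derivative D) (at 0)"
  using DERIV_shift[of f D 0 z] by (simp add: add.commute)

lemma line_nth: "((q::real^3) + t *\<^sub>R axis i 1) $ k = q $ k + (if k = i then t else 0)"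
  by (simp add: axis_def)

lemma pdI: "((\<lambda>t. F (p + t *\<^sub>R axis i 1)) has_real_derivative D) (at 0) \<Longrightarrow> pd F i p = D"
  unfolding pd_def by (rule DERIV_imp_deriv)

definition gam0 :: "real \<Rightarrow> real \<Rightarrow> real \<Rightarrow> real \<Rightarrow> real \<Rightarrow> real \<Rightarrow> real \<Rightarrow> 3 \<Rightarrow> 3 \<Rightarrow> real^3" where
 "gam0 s L M F1 bz a b i j = (let g = -2*a*b*(s+L) + b^2*M in
  if i = 1 \<and> j = 1 then 0
  else if (i = 1 \<and> j = 2) \<or> (i = 2 \<and> j = 1) then (-(s+L)) *\<^sub>R vector [a, b, 1]
  else if i = 2 \<and> j = 2 then M *\<^sub>R vector [a, b, 1]
  else if (i = 1 \<and> j = 3) \<or> (i = 3 \<and> j = 1) then vector [a*b*(s+L), (s-L) + b^2*(s+L), b*(s+L)]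
  else if (i = 2 \<and> j = 3) \<or> (i = 3 \<and> j = 2) then
     vector [L - s + a*(a*(L+s) - b*M), b*(a*(L+s) - b*M), a*(L+s) - b*M]
  else vector [-2*b*L - F1 + a*g, b*M - 2*a * s - bz + b*g, g])"

definition "cA s F1 i = (if i = (1::3) then 0 else if i = 2 then 2 * s else F1)"
definition "cB L M bz i = (if i = (1::3) then 2 * L else if i = 2 then - M else bz)"

lemma chr_alg:
  "(\<Sum>l\<in>UNIV. Gi a b $ k $ l * (dGm a b (cA s F1 i) (cB L M bz i) $ j $ l + dGm a b (cA s F1 j) (cB L M bz j) $ i $ l
      - dGm a b (cA s F1 l) (cB L M bz l) $ i $ j)) / 2 = gam0 s L M F1 bz a b i j $ k"
proof -
  have "i = 1 \<or> i = 2 \<or> i = 3" "j = 1 \<or> j = 2 \<or> j = 3" "k = 1 \<or> k = 2 \<or> k = 3"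
    by (rule exhaust_3)+
  then show ?thesis
    unfolding sum_3
    by (elim disjE; simp add: Gi_def dGm_def cA_def cB_def gam0_def Let_def; simp add: algebra_simps power2_eq_square)
qed

definition dgam0 :: "real \<Rightarrow> real \<Rightarrow> real \<Rightarrow> real \<Rightarrow> real \<Rightarrow> real \<Rightarrow> real \<Rightarrow> real \<Rightarrow> real \<Rightarrow> 3 \<Rightarrow> 3 \<Rightarrow> real^3" where
 "dgam0 s L M a b A B Lp Mp j k = (let S = s + L; W = a*(L+s) - b*M; dW = A*S + a*Lp - B*M - b*Mp in
  if j = 1 \<and> k = 1 then 0
  else if (j = 1 \<and> k = 2) \<or> (j = 2 \<and> k = 1) then vector [-(Lp*a + S*A), -(Lp*b + S*B), -Lp]
  else if j = 2 \<and> k = 2 then vector [Mp*a + M*A, Mp*b + M*B, Mp]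
  else if (j = 1 \<and> k = 3) \<or> (j = 3 \<and> k = 1) then
     vector [A*b*S + a*B*S + a*b*Lp, -Lp + 2*b*B*S + b^2*Lp, B*S + b*Lp]
  else if (j = 2 \<and> k = 3) \<or> (j = 3 \<and> k = 2) then vector [Lp + A*W + a*dW, B*W + b*dW, dW]
  else 0)"

lemma gam0_D:
  assumes jk: "\<not> (j = 3 \<and> k = 3)"
    and d: "(\<alpha> has_real_derivative A) (at 0)" "(\<beta> has_real_derivative B) (at 0)"
      "(lm has_real_derivative Lp) (at 0)" "(\<mu> has_real_derivative Mp) (at 0)"
  shows "((\<lambda>t. gam0 s (lm t) (\<mu> t) (\<phi> t) (\<psi> t) (\<alpha> t) (\<beta> t) j k $ l) has_real_derivative
           dgam0 s (lm 0) (\<mu> 0) (\<alpha> 0) (\<beta> 0) A B Lp Mp j k $ l) (at 0)"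
proof -
  have "j = 1 \<or> j = 2 \<or> j = 3" "k = 1 \<or> k = 2 \<or> k = 3" "l = 1 \<or> l = 2 \<or> l = 3"
    by (rule exhaust_3)+
  then show ?thesis using jk
    by (elim disjE; simp add: gam0_def dgam0_def Let_def; auto intro!: derivative_eq_intros d simp: algebra_simps power2_eq_square)
qed

locale setting =
  fixes I :: "real set" and lam ff hh :: "real \<Rightarrow> real" and s :: real
  assumes I_open: "open I" and lam_sm: "smooth_on I lam" and lam_pos: "\<forall>z\<in>I. lam z > 0"
    and ff_sm: "smooth_on I ff" and hh_sm: "smooth_on I hh"
begin

abbreviation "G \<equiv> gkm_metric s lam ff hh"

definition "Mu z = deriv lam z / (2 * lam z)"
definition "Mup z = (deriv (deriv lam) z * lam z - (deriv lam z)^2) / (2 * (lam z)^2)"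
definition "aa q = s * 2 * q$2 + ff (q$3)"
definition "bb q = 2 * lam (q$3) * q$1 - Mu (q$3) * q$2 + hh (q$3)"
definition "Aa i q = cA s (deriv ff (q$3)) i"
definition "Bz q = 2 * deriv lam (q$3) * q$1 - Mup (q$3) * q$2 + deriv hh (q$3)"
definition "Bb i q = cB (lam (q$3)) (Mu (q$3)) (Bz q) i"

lemma G_eq: "G q = Gm (aa q) (bb q)"
  unfolding frame_metric_eq aa_def bb_def Mu_def ..

lemma sm_D: assumes "smooth_on I f" "z \<in> I" shows "(f has_real_derivative deriv f z) (at z)"
  and "(deriv f has_real_derivative deriv (deriv f) z) (at z)"
proof -
  have "((deriv ^^ 0) f) differentiable (at z)" "((deriv ^^ 1) f) differentiable (at z)"
    using assms unfolding smooth_on_def by blast+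
  then show "(f has_real_derivative deriv f z) (at z)"
     "(deriv f has_real_derivative deriv (deriv f) z) (at z)"
    by (simp_all add: DERIV_deriv_iff_real_differentiable)
qed

lemma Mu_D: assumes "z \<in> I" shows "(Mu has_real_derivative Mup z) (at z)"
proof -
  have p: "lam z > 0" using lam_pos assms by auto
  have "((\<lambda>z. deriv lam z / (2 * lam z)) has_real_derivative Mup z) (at z)"
    using sm_D[OF lam_sm assms] p
    by (auto intro!: derivative_eq_intros simp: Mup_def power2_eq_square field_simps)
  then show ?thesis unfolding Mu_def[abs_def] .
qed

lemma aa_D: assumes "q$3 \<in> I" shows "((\<lambda>t. aa (q + t *\<^sub>R axis i 1)) has_real_derivative Aa i q) (at 0)"
proof -
  note H = shift_deriv[OF sm_D(1)[OF ff_sm assms]]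
  have "i = 1 \<or> i = 2 \<or> i = 3" by (rule exhaust_3)
  then show ?thesis
    by (elim disjE; simp add: aa_def Aa_def cA_def axis_def; auto intro!: derivative_eq_intros H)
qed

lemma bb_D: assumes "q$3 \<in> I" shows "((\<lambda>t. bb (q + t *\<^sub>R axis i 1)) has_real_derivative Bb i q) (at 0)"
proof -
  note H = shift_deriv[OF sm_D(1)[OF hh_sm assms]] shift_deriv[OF sm_D(1)[OF lam_sm assms]]
    shift_deriv[OF Mu_D[OF assms]]
  have "i = 1 \<or> i = 2 \<or> i = 3" by (rule exhaust_3)
  then show ?thesis
    by (elim disjE; simp add: bb_def Bb_def cB_def Bz_def axis_def; auto intro!: derivative_eq_intros H)
qed

lemma pd_G: assumes "q$3 \<in> I"
  shows "pd (\<lambda>q. G q $ j $ l) i q = dGm (aa q) (bb q) (Aa i q) (Bb i q) $ j $ l"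
  apply (rule pdI)
  using Gm_deriv[OF aa_D[OF assms] bb_D[OF assms], where j=j and l=l] by (simp add: G_eq)

definition "gamv i j q = gam0 s (lam (q$3)) (Mu (q$3)) (deriv ff (q$3)) (Bz q) (aa q) (bb q) i j"


lemma chr_eq: assumes "q$3 \<in> I" shows "christoffel G q k i j = gamv i j q $ k"
  unfolding christoffel_def pd_G[OF assms]
  unfolding G_eq inv_Gm
  unfolding Aa_def Bb_def chr_alg gamv_def ..

lemma pd_local: assumes "\<forall>q. q$3 \<in> I \<longrightarrow> F q = H q" "p$3 \<in> I" shows "pd F i p = pd H i p"
  unfolding pd_def
proof (rule deriv_cong_ev[OF _ refl])
  obtain e where e: "e > 0" "ball (p$3) e \<subseteq> I" using I_open assms(2) openE by blast
  have "\<forall>t. dist t 0 < e \<longrightarrow> F (p + t *\<^sub>R axis i 1) = H (p + t *\<^sub>R axis i 1)"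
  proof (intro allI impI)
    fix t :: real assume "dist t 0 < e"
    then have "(p + t *\<^sub>R axis i 1) $ 3 \<in> ball (p$3) e"
      by (auto simp: axis_def dist_real_def)
    then show "F (p + t *\<^sub>R axis i 1) = H (p + t *\<^sub>R axis i 1)" using e assms(1) by blast
  qed
  then show "\<forall>\<^sub>F t in nhds 0. F (p + t *\<^sub>R axis i 1) = H (p + t *\<^sub>R axis i 1)"
    unfolding eventually_nhds_metric using e(1) by blast
qed

lemma line3_D: assumes "(g has_real_derivative D) (at (p$3))"
  shows "((\<lambda>t. g (((p::real^3) + t *\<^sub>R axis (i::3) 1) $ 3)) has_real_derivative (if i = 3 then D else 0)) (at 0)"
proof -
  have "i = 1 \<or> i = 2 \<or> i = 3" by (rule exhaust_3)
  then show ?thesis using shift_deriv[OF assms]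
    by (elim disjE; simp add: axis_def)
qed

lemma pd_chr: assumes "p$3 \<in> I" "\<not> (j = 3 \<and> k = 3)"
  shows "pd (\<lambda>q. christoffel G q l j k) i p =
    dgam0 s (lam (p$3)) (Mu (p$3)) (aa p) (bb p) (Aa i p) (Bb i p)
      (if i = 3 then deriv lam (p$3) else 0) (if i = 3 then Mup (p$3) else 0) j k $ l"
proof -
  have "pd (\<lambda>q. christoffel G q l j k) i p = pd (\<lambda>q. gamv j k q $ l) i p"
    using chr_eq assms(1) by (intro pd_local) auto
  also have "\<dots> = dgam0 s (lam (p$3)) (Mu (p$3)) (aa p) (bb p) (Aa i p) (Bb i p)
      (if i = 3 then deriv lam (p$3) else 0) (if i = 3 then Mup (p$3) else 0) j k $ l"
    apply (rule pdI)
    unfolding gamv_def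
    using gam0_D[OF assms(2) aa_D[OF assms(1)] bb_D[OF assms(1)] line3_D[OF sm_D(1)[OF lam_sm assms(1)]]
       line3_D[OF Mu_D[OF assms(1)]], where l=l and \<phi> = "\<lambda>t. deriv ff ((p + t *\<^sub>R axis i 1) $ 3)"
       and \<psi> = "\<lambda>t. Bz (p + t *\<^sub>R axis i 1)" and s = s]
    by simp
  finally show ?thesis .
qed

end

lemma pd_const: "pd (\<lambda>q. K) i p = 0"
  unfolding pd_def by simp

lemma minv_one: "matrix_inv (mat 1 :: real^'n^'n) = mat 1"
  by (rule matrix_inv_eq) simp_all

definition emb :: "2 \<Rightarrow> real^3" where "emb a = vector [axis a 1 $ 1, axis a 1 $ 2, 0]"

lemma emb12[simp]: "emb 1 = vector [1,0,0]" "emb 2 = vector [0,1,0]"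
  by (simp_all add: emb_def axis_def)

locale slice = setting +
  fixes c :: real
  assumes cI: "c \<in> I"
begin

abbreviation "sf \<equiv> slice_map c"

lemma sf_nth[simp]: "sf w $ 1 = w $ 1" "sf w $ 2 = w $ 2" "sf w $ 3 = c"
  by (simp_all add: slice_map_def)

lemma dmap_sf: "dmap sf a u = emb a"
proof -
  have "dmap sf a u $ k = emb a $ k" for k
  proof -
    have "k = 1 \<or> k = 2 \<or> k = 3" by (rule exhaust_3)
    moreover have "pd (\<lambda>w. sf w $ 1) a u = axis a 1 $ 1"
      by (rule pdI) (auto intro!: derivative_eq_intros)
    moreover have "pd (\<lambda>w. sf w $ 2) a u = axis a 1 $ 2"
      by (rule pdI) (auto intro!: derivative_eq_intros)
    moreover have "pd (\<lambda>w. sf w $ 3) a u = 0"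
      by (simp add: pd_const)
    ultimately show ?thesis unfolding dmap_def
      by (auto simp: emb_def)
  qed
  then show ?thesis by (simp add: vec_eq_iff)
qed

lemma ind_sf: "ind_metric G sf u = mat 1"
  unfolding ind_metric_def G_eq dmap_sf
  by (simp add: vec_eq_iff forall_2 Gm_def inner_vec_def sum_3 matrix_vector_mult_def mat_def)

lemma ind_sf': "ind_metric G sf = (\<lambda>u. mat 1)"
  using ind_sf by auto

lemma chr_ind: "christoffel (ind_metric G sf) u c' a b = 0"
  unfolding christoffel_def ind_sf' pd_const by simp

lemma chr_sf: "christoffel G (sf u) k i j = gamv i j (sf u) $ k"
  using chr_eq cI by simp

definition "Tv u = Mu c *\<^sub>R vector [aa (sf u), bb (sf u), 1]"

lemma tension_sf: "tension G sf u = Tv u"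
  unfolding tension_def chr_ind ind_sf minv_one covd_def dmap_sf pd_const chr_sf
  by (simp add: vec_eq_iff forall_3 sum_2 sum_3 mat_def gamv_def gam0_def Tv_def Let_def)

definition "dTv b = Mu c *\<^sub>R vector [2 * s * (axis b 1 $ 2), 2 * lam c * (axis b 1 $ 1) - Mu c * (axis b 1 $ 2), 0::real]"

lemma aa_sf: "aa (sf w) = s * 2 * w$2 + ff c" by (simp add: aa_def)
lemma bb_sf: "bb (sf w) = 2 * lam c * w$1 - Mu c * w$2 + hh c" by (simp add: bb_def)

lemma pd_Tv: "pd (\<lambda>w. Tv w $ (k::3)) (b::2) w = dTv b $ k"
proof -
  have "k = 1 \<or> k = 2 \<or> k = 3" by (rule exhaust_3)
  then show ?thesis
    apply (elim disjE)
    apply (rule pdI, simp add: Tv_def dTv_def aa_sf bb_sf, (auto intro!: derivative_eq_intros simp: algebra_simps)[1])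
    apply (rule pdI, simp add: Tv_def dTv_def aa_sf bb_sf, (auto intro!: derivative_eq_intros simp: algebra_simps)[1])
    apply (rule pdI, simp add: Tv_def dTv_def aa_sf bb_sf)
    done
qed

definition "Vv b = (if b = 1 then (Mu c * (lam c + s)) *\<^sub>R vector [0, 1, 0] else Mu c *\<^sub>R vector [s + lam c, - Mu c, 0::real])"

lemma covdT: "covd G sf (tension G sf) b w = Vv b"
proof -
  have t: "tension G sf = Tv" using tension_sf by auto
  have "b = 1 \<or> b = 2" by (rule exhaust_2)
  then show ?thesis
    unfolding covd_def dmap_sf chr_sf t pd_Tv
    by (elim disjE; simp add: vec_eq_iff forall_3 sum_3 gamv_def gam0_def Tv_def Vv_def dTv_def Let_def axis_def;
        simp add: algebra_simps power2_eq_square)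
qed

lemma covdT': "covd G sf (tension G sf) b = (\<lambda>w. Vv b)"
  using covdT by auto

lemma tension_sf': "tension G sf = Tv"
  using tension_sf by auto

lemma sfI: "sf u $ 3 \<in> I" using cI by simp

lemma curv_sf: "j \<noteq> 3 \<Longrightarrow> curv G (sf u) l i j j =
   dgam0 s (lam c) (Mu c) (aa (sf u)) (bb (sf u)) (Aa i (sf u)) (Bb i (sf u))
      (if i = 3 then deriv lam c else 0) (if i = 3 then Mup c else 0) j j $ l
 - dgam0 s (lam c) (Mu c) (aa (sf u)) (bb (sf u)) (Aa j (sf u)) (Bb j (sf u))
      (if j = 3 then deriv lam c else 0) (if j = 3 then Mup c else 0) i j $ l
 + (\<Sum>m\<in>UNIV. gamv i m (sf u) $ l * gamv j j (sf u) $ m - gamv j m (sf u) $ l * gamv i j (sf u) $ m)"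
  unfolding curv_def chr_sf
  using pd_chr[OF sfI, of j j l i] pd_chr[OF sfI, of i j l j] by simp

lemma bitension_sf: assumes "s = 1 \<or> s = -1"
  shows "bitension G sf u = (Mu c * (Mup c - 2*(Mu c)^2 - 4*(1 + s*lam c)^2)) *\<^sub>R vector [aa (sf u), bb (sf u), 1]"
  unfolding bitension_def ind_sf minv_one chr_ind
  unfolding covdT'
  unfolding covd_def pd_const dmap_sf tension_sf' chr_sf
  unfolding curv_op_def
  apply (simp add: sum_2 mat_def)
  apply (simp add: sum_3 curv_sf)
  apply (simp add: vec_eq_iff forall_3 gamv_def gam0_def dgam0_def Let_def Aa_def Bb_def cA_def cB_def Vv_def Tv_def sum_3)
  using assms apply (elim disjE)
  apply (simp_all add: algebra_simps power2_eq_square)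
  done

end


lemma vec3_ne0: "vector [a, b, 1::real] \<noteq> (0::real^3)"
proof
  assume "vector [a, b, 1::real] = (0::real^3)"
  then have "(vector [a, b, 1::real] :: real^3) $ 3 = 0" by simp
  then show False by simp
qed

theorem proposition6p3:
  fixes I :: "real set" and lam ff hh :: "real \<Rightarrow> real" and s c :: real
  assumes "open I" and "is_interval I" and "I \<noteq> {}"
    and "smooth_on I lam" and "\<forall>z\<in>I. lam z > 0" and "\<exists>z1\<in>I. \<exists>z2\<in>I. lam z1 \<noteq> lam z2"
    and "smooth_on I ff" and "smooth_on I hh"
    and "s = 1 \<or> s = -1"
    and "c \<in> I"
  shows "proper_biharmonic (gkm_metric s lam ff hh) (slice_map c) \<longleftrightarrow>
           (deriv lam c \<noteq> 0 \<and>
            lam c * deriv (deriv lam) c - 2 * (deriv lam c)^2 - 8 * (lam c)^2 * (1 + s * lam c)^2 = 0)"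
proof -
  interpret slice I lam ff hh s c
    using assms by unfold_locales auto
  have lp: "lam c > 0" using assms by auto
  have bh: "biharmonic G sf \<longleftrightarrow> Mu c * (Mup c - 2*(Mu c)^2 - 4*(1 + s*lam c)^2) = 0"
    unfolding biharmonic_def bitension_sf[OF assms(9)] using vec3_ne0 by simp
  have mn: "minimal_map G sf \<longleftrightarrow> Mu c = 0"
    unfolding minimal_map_def tension_sf Tv_def using vec3_ne0 by simp
  have mu0: "Mu c = 0 \<longleftrightarrow> deriv lam c = 0" using lp by (simp add: Mu_def)
  have "Mup c - 2*(Mu c)^2 - 4*(1 + s*lam c)^2 =
      (lam c * deriv (deriv lam) c - 2 * (deriv lam c)^2 - 8 * (lam c)^2 * (1 + s * lam c)^2) / (2 * (lam c)^2)"
    using lp by (simp add: Mup_def Mu_def field_simps power2_eq_square)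
  then have "Mup c - 2*(Mu c)^2 - 4*(1 + s*lam c)^2 = 0 \<longleftrightarrow>
      lam c * deriv (deriv lam) c - 2 * (deriv lam c)^2 - 8 * (lam c)^2 * (1 + s * lam c)^2 = 0"
    using lp by simp
  then show ?thesis
    unfolding proper_biharmonic_def bh mn using mu0 by auto
qed

end
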